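(* Let $0<p<\infty$, let $f\in L^{p,\infty}(\mathbb{R}^n)$ satisfy $|\{x\in\mathbb{R}^n:|f(x)|=\lambda\}|=0$ for all $\lambda>0$, and let $\{f_{(t)}\}_{t>0}$ be a family of measurable functions. Consider the statements: (1) for every $\varepsilon>0$ there is a set $A_\varepsilon\subset\mathbb{R}^n$ with $|A_\varepsilon|<\varepsilon$ and $\lim_{t\to0^+}\|f-f_{(t)}\|_{L^{p,\infty}(\mathbb{R}^n\setminus A_\varepsilon)}=0$; (2) $\lim_{t\to0^+}|\{x\in\mathbb{R}^n:|f_{(t)}(x)-f(x)|>\lambda\}|=0$ for every $\lambda>0$; (3) $\lim_{t\to0^+}|\{x\in\mathbb{R}^n:|f_{(t)}(x)|>\lambda\}|=|\{x\in\mathbb{R}^n:|f(x)|>\lambda\}|$ for every $\lambda>0$. Then (1) implies (2) and (2) implies (3). Moreover, in general (3) does not imply (2) and (2) does not imply (1): there exist such $p$, $f$ and $\{f_{(t)}\}$ for which (3) holds but (2) fails, and ones for which (2) holds but (1) fails.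
   Context: $|\cdot|$ denotes Lebesgue measure. For a measurable set $E$, $\|g\|_{L^{p,\infty}(E)}=\sup_{\lambda>0}\lambda|\{x\in E:|g(x)|>\lambda\}|^{1/p}$, and $L^{p,\infty}(\mathbb{R}^n)$ is the space of measurable $g$ with this quantity finite for $E=\mathbb{R}^n$. *)

theory Defs
  imports "HOL-Analysis.Analysis"
begin

definition enn_powr :: "ennreal \<Rightarrow> real \<Rightarrow> ennreal" where
  "enn_powr m a = (if m = \<infinity> then \<infinity> else ennreal (enn2real m powr a))"

definition weak_Lp_norm :: "real \<Rightarrow> 'a::euclidean_space set \<Rightarrow> ('a \<Rightarrow> real) \<Rightarrow> ennreal" where
  "weak_Lp_norm p E g =
     (SUP l\<in>{0<..}. ennreal l * enn_powr (emeasure lebesgue {x\<in>E. \<bar>g x\<bar> > l}) (1 / p))"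

definition in_weak_Lp :: "real \<Rightarrow> ('a::euclidean_space \<Rightarrow> real) \<Rightarrow> bool" where
  "in_weak_Lp p g \<longleftrightarrow> g \<in> borel_measurable lebesgue \<and> weak_Lp_norm p UNIV g < \<infinity>"

definition hyps :: "real \<Rightarrow> ('a::euclidean_space \<Rightarrow> real) \<Rightarrow> (real \<Rightarrow> 'a \<Rightarrow> real) \<Rightarrow> bool" where
  "hyps p f F \<longleftrightarrow> 0 < p \<and> in_weak_Lp p f
     \<and> (\<forall>l>0. emeasure lebesgue {x. \<bar>f x\<bar> = l} = 0)
     \<and> (\<forall>t>0. F t \<in> borel_measurable lebesgue)"

definition cond1 :: "real \<Rightarrow> ('a::euclidean_space \<Rightarrow> real) \<Rightarrow> (real \<Rightarrow> 'a \<Rightarrow> real) \<Rightarrow> bool" where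
  "cond1 p f F \<longleftrightarrow> (\<forall>\<epsilon>>0. \<exists>A. A \<in> sets lebesgue \<and> emeasure lebesgue A < ennreal \<epsilon> \<and>
      ((\<lambda>t. weak_Lp_norm p (UNIV - A) (\<lambda>x. f x - F t x)) \<longlongrightarrow> 0) (at_right 0))"

definition cond2 :: "('a::euclidean_space \<Rightarrow> real) \<Rightarrow> (real \<Rightarrow> 'a \<Rightarrow> real) \<Rightarrow> bool" where
  "cond2 f F \<longleftrightarrow> (\<forall>l>0.
      ((\<lambda>t. emeasure lebesgue {x. \<bar>F t x - f x\<bar> > l}) \<longlongrightarrow> 0) (at_right 0))"

definition cond3 :: "('a::euclidean_space \<Rightarrow> real) \<Rightarrow> (real \<Rightarrow> 'a \<Rightarrow> real) \<Rightarrow> bool" where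
  "cond3 f F \<longleftrightarrow> (\<forall>l>0.
      ((\<lambda>t. emeasure lebesgue {x. \<bar>F t x\<bar> > l}) \<longlongrightarrow> emeasure lebesgue {x. \<bar>f x\<bar> > l}) (at_right 0))"

end

theory Submission
  imports Defs
begin

lemma enn_powr_one: "enn_powr m 1 = m"
  unfolding enn_powr_def by (cases m) (auto simp: top_unique)

lemma enn_powr_one': "enn_powr m (1/1) = m"
  by (simp add: enn_powr_one)

lemma ball_fin: "emeasure lebesgue (ball (0::'a::euclidean_space) r) < \<infinity>"
  using emeasure_lborel_ball_finite[of 0 r] by (simp add: emeasure_completion)

lemma ball_pos: "0 < r \<Longrightarrow> 0 < emeasure lebesgue (ball (0::'a::euclidean_space) r)"
proof -
  assume r: "0 < r"
  have "emeasure lebesgue (ball (0::'a) r) = emeasure lborel (ball (0::'a) r)"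
    by (simp add: emeasure_completion)
  also have "\<dots> = ennreal (measure lborel (ball (0::'a) r))"
    using emeasure_lborel_ball_finite[of 0 r] by (intro emeasure_eq_ennreal_measure) (simp add: less_top)
  finally show ?thesis using content_ball_pos[OF r, of 0] by simp
qed

lemma mset: "(h::'a::euclidean_space \<Rightarrow> real) \<in> borel_measurable lebesgue \<Longrightarrow> {x. l < h x} \<in> sets lebesgue"
proof -
  assume "h \<in> borel_measurable lebesgue"
  then have "{x\<in>space lebesgue. l < h x} \<in> sets lebesgue" by measurable
  then show ?thesis by simp
qed

lemma weak_fin:
  assumes "in_weak_Lp p f" "l > 0"
  shows "emeasure lebesgue {x. l < \<bar>f x\<bar>} < \<infinity>"
proof (rule ccontr)
  assume "\<not> ?thesis"
  then have m: "emeasure lebesgue {x. l < \<bar>f x\<bar>} = \<infinity>" by (simp add: less_top[symmetric])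
  have "ennreal l * enn_powr (emeasure lebesgue {x\<in>UNIV. l < \<bar>f x\<bar>}) (1/p) \<le> weak_Lp_norm p UNIV f"
    unfolding weak_Lp_norm_def by (rule SUP_upper) (use assms in auto)
  with m assms(2) have "weak_Lp_norm p UNIV f = \<infinity>"
    by (simp add: enn_powr_def ennreal_mult_top top_unique)
  with assms(1) show False by (simp add: in_weak_Lp_def)
qed

lemma small:
  assumes p: "p > 0" and l: "l > 0" and e: "e > 0"
    and lt: "ennreal l * enn_powr m (1/p) < ennreal (l * e powr (1/p))"
  shows "m < ennreal e"
proof -
  have mf: "m \<noteq> \<infinity>"
  proof
    assume "m = \<infinity>"
    then show False using lt l by (simp add: enn_powr_def ennreal_mult_top)
  qed
  then have "ennreal l * enn_powr m (1/p) = ennreal (l * enn2real m powr (1/p))"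
    using l by (simp add: enn_powr_def ennreal_mult)
  with lt have "l * enn2real m powr (1/p) < l * e powr (1/p)"
    using l e by (simp add: ennreal_less_iff)
  then have lt2: "enn2real m powr (1/p) < e powr (1/p)" using l by simp
  have "enn2real m < e"
  proof (rule ccontr)
    assume "\<not> enn2real m < e"
    then have "e powr (1/p) \<le> enn2real m powr (1/p)"
      using e p by (intro powr_mono2) auto
    with lt2 show False by simp
  qed
  then have "ennreal (enn2real m) < ennreal e" using e by (simp add: ennreal_less_iff)
  then show ?thesis using mf by (simp add: less_top)
qed


lemma imp12:
  assumes H: "hyps p f F" and C: "cond1 p f F"
  shows "cond2 f F"
  unfolding cond2_def
proof (intro allI impI)
  fix l :: real assume l: "l > 0"
  from H have p: "0 < p" and fm: "f \<in> borel_measurable lebesgue"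
    and Fm: "\<And>t. t > 0 \<Longrightarrow> F t \<in> borel_measurable lebesgue"
    by (auto simp: hyps_def in_weak_Lp_def)
  show "((\<lambda>t. emeasure lebesgue {x. l < \<bar>F t x - f x\<bar>}) \<longlongrightarrow> 0) (at_right 0)"
  proof (rule order_tendstoI)
    fix a :: ennreal assume "a < 0" then show "\<forall>\<^sub>F t in at_right 0. a < emeasure lebesgue {x. l < \<bar>F t x - f x\<bar>}"
      by simp
  next
    fix a :: ennreal assume a: "0 < a"
    obtain b where b: "0 < b" "b < a" using dense[OF a] by blast
    then have bf: "b \<noteq> \<infinity>" by (auto simp: top_unique)
    define e where "e = enn2real b"
    have e: "0 < e" "ennreal e < a" using b bf unfolding e_def
      by (auto simp: enn2real_positive_iff less_top)
    obtain A where A: "A \<in> sets lebesgue" "emeasure lebesgue A < ennreal (e/2)"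
      and T: "((\<lambda>t. weak_Lp_norm p (UNIV - A) (\<lambda>x. f x - F t x)) \<longlongrightarrow> 0) (at_right 0)"
      using C e unfolding cond1_def by (meson half_gt_zero)
    have pos: "0 < ennreal (l * (e/2) powr (1/p))" using l e by simp
    have ev: "\<forall>\<^sub>F t in at_right 0. weak_Lp_norm p (UNIV - A) (\<lambda>x. f x - F t x) < ennreal (l * (e/2) powr (1/p))"
      using order_tendstoD(2)[OF T pos] .
    show "\<forall>\<^sub>F t in at_right 0. emeasure lebesgue {x. l < \<bar>F t x - f x\<bar>} < a"
      using ev eventually_at_right_less[of "0::real"]
    proof eventually_elim
      case (elim t)
      have "ennreal l * enn_powr (emeasure lebesgue {x\<in>UNIV - A. l < \<bar>f x - F t x\<bar>}) (1/p)
          \<le> weak_Lp_norm p (UNIV - A) (\<lambda>x. f x - F t x)"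
        unfolding weak_Lp_norm_def by (rule SUP_upper) (use l in auto)
      then have lt: "ennreal l * enn_powr (emeasure lebesgue {x\<in>UNIV - A. l < \<bar>f x - F t x\<bar>}) (1/p)
          < ennreal (l * (e/2) powr (1/p))"
        using elim(1) by (rule le_less_trans)
      have e2: "0 < e/2" using e by simp
      have m1: "emeasure lebesgue {x\<in>UNIV - A. l < \<bar>f x - F t x\<bar>} < ennreal (e/2)"
        by (rule small[OF p l e2 lt])
      have ms: "{x\<in>UNIV - A. l < \<bar>f x - F t x\<bar>} \<in> sets lebesgue"
      proof -
        have "{x. l < \<bar>f x - F t x\<bar>} \<in> sets lebesgue"
          using fm Fm[OF elim(2)] by (intro mset) measurable
        then have "(UNIV - A) \<inter> {x. l < \<bar>f x - F t x\<bar>} \<in> sets lebesgue" using A(1) by auto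
        moreover have "(UNIV - A) \<inter> {x. l < \<bar>f x - F t x\<bar>} = {x\<in>UNIV - A. l < \<bar>f x - F t x\<bar>}" by auto
        ultimately show ?thesis by simp
      qed
      have "emeasure lebesgue {x. l < \<bar>F t x - f x\<bar>} \<le> emeasure lebesgue (A \<union> {x\<in>UNIV - A. l < \<bar>f x - F t x\<bar>})"
        using A(1) ms by (intro emeasure_mono) auto
      also have "\<dots> \<le> emeasure lebesgue A + emeasure lebesgue {x\<in>UNIV - A. l < \<bar>f x - F t x\<bar>}"
        using A(1) ms by (rule emeasure_subadditive)
      also have "\<dots> < ennreal (e/2) + ennreal (e/2)"
        using A(2) m1 by (rule add_strict_mono)
      also have "\<dots> = ennreal e" using e by (simp flip: ennreal_plus)
      also have "\<dots> < a" by (rule e(2))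
      finally show ?case .
    qed
  qed
qed


lemma imp23:
  assumes H: "hyps p f F" and C: "cond2 f F"
  shows "cond3 f F"
  unfolding cond3_def
proof (intro allI impI)
  fix l :: real assume l: "0 < l"
  from H have p: "0 < p" and W: "in_weak_Lp p f"
    and lev: "\<And>s. s > 0 \<Longrightarrow> emeasure lebesgue {x. \<bar>f x\<bar> = s} = 0"
    and Fm: "\<And>t. t > 0 \<Longrightarrow> F t \<in> borel_measurable lebesgue"
    by (auto simp: hyps_def)
  have fm: "f \<in> borel_measurable lebesgue" using W by (simp add: in_weak_Lp_def)
  have gfin: "\<And>s. s > 0 \<Longrightarrow> emeasure lebesgue {x. s < \<bar>f x\<bar>} < \<infinity>"
    using weak_fin[OF W] by blast
  have fms: "\<And>s. {x. s < \<bar>f x\<bar>} \<in> sets lebesgue"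
    using fm by (intro mset) measurable
  have Fms: "\<And>t s. t > 0 \<Longrightarrow> {x. s < \<bar>F t x\<bar>} \<in> sets lebesgue"
    using Fm by (intro mset) measurable
  have Dms: "\<And>t s. t > 0 \<Longrightarrow> {x. s < \<bar>F t x - f x\<bar>} \<in> sets lebesgue"
    using Fm fm by (intro mset) measurable
  have Cl: "\<And>s. s > 0 \<Longrightarrow> ((\<lambda>t. emeasure lebesgue {x. s < \<bar>F t x - f x\<bar>}) \<longlongrightarrow> 0) (at_right 0)"
    using C unfolding cond2_def by blast
  show "((\<lambda>t. emeasure lebesgue {x. l < \<bar>F t x\<bar>}) \<longlongrightarrow> emeasure lebesgue {x. l < \<bar>f x\<bar>}) (at_right 0)"
  proof (rule order_tendstoI)
    fix a assume a: "a < emeasure lebesgue {x. l < \<bar>f x\<bar>}"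
    define E where "E n = {x. l + l / real (Suc n) < \<bar>f x\<bar>}" for n
    have inc: "incseq E"
      unfolding incseq_def E_def
    proof (intro allI impI subsetI)
      fix m n x assume mn: "m \<le> n" and x: "x \<in> {x. l + l / real (Suc m) < \<bar>f x\<bar>}"
      have "l / real (Suc n) \<le> l / real (Suc m)"
        using mn l by (intro divide_left_mono) auto
      then show "x \<in> {x. l + l / real (Suc n) < \<bar>f x\<bar>}" using x by auto
    qed
    have UE: "(\<Union>n. E n) = {x. l < \<bar>f x\<bar>}"
    proof
      show "(\<Union>n. E n) \<subseteq> {x. l < \<bar>f x\<bar>}"
        unfolding E_def using l by (auto intro: less_trans[rotated])
    next
      show "{x. l < \<bar>f x\<bar>} \<subseteq> (\<Union>n. E n)"
      proof
        fix x assume "x \<in> {x. l < \<bar>f x\<bar>}"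
        then have "0 < (\<bar>f x\<bar> - l) / l" using l by simp
        then obtain n where n: "inverse (real (Suc n)) < (\<bar>f x\<bar> - l) / l"
          using reals_Archimedean by blast
        then have "l / real (Suc n) < \<bar>f x\<bar> - l" using l
          by (simp add: field_simps)
        then have "x \<in> E n" unfolding E_def by simp
        then show "x \<in> (\<Union>n. E n)" by blast
      qed
    qed
    have "(\<lambda>n. emeasure lebesgue (E n)) \<longlonglongrightarrow> emeasure lebesgue (\<Union>n. E n)"
      using fms inc unfolding E_def by (intro Lim_emeasure_incseq) auto
    then have "eventually (\<lambda>n. a < emeasure lebesgue (E n)) sequentially"
      using a UE by (intro order_tendstoD(1)) auto
    then obtain n where n: "a < emeasure lebesgue (E n)"
      by (auto simp: eventually_sequentially)
    define \<eta> where "\<eta> = l / real (Suc n)"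
    have eta: "0 < \<eta>" using l unfolding \<eta>_def by simp
    define G where "G = emeasure lebesgue (E n)"
    have Gf: "G < \<infinity>" unfolding G_def E_def
      by (rule gfin) (use l in \<open>simp add: add_pos_pos\<close>)
    have aG: "a < G" using n G_def by simp
    have c: "0 < G - a" using aG by (rule diff_gr0_ennreal)
    have ev: "\<forall>\<^sub>F t in at_right 0. emeasure lebesgue {x. \<eta> < \<bar>F t x - f x\<bar>} < G - a"
      using order_tendstoD(2)[OF Cl[OF eta] c] .
    show "\<forall>\<^sub>F t in at_right 0. a < emeasure lebesgue {x. l < \<bar>F t x\<bar>}"
      using ev eventually_at_right_less[of "0::real"]
    proof eventually_elim
      case (elim t)
      have sub: "E n \<subseteq> {x. l < \<bar>F t x\<bar>} \<union> {x. \<eta> < \<bar>F t x - f x\<bar>}"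
        unfolding E_def \<eta>_def by auto
      have "G \<le> emeasure lebesgue ({x. l < \<bar>F t x\<bar>} \<union> {x. \<eta> < \<bar>F t x - f x\<bar>})"
        unfolding G_def using sub Fms[OF elim(2)] Dms[OF elim(2)] by (intro emeasure_mono) auto
      also have "\<dots> \<le> emeasure lebesgue {x. l < \<bar>F t x\<bar>} + emeasure lebesgue {x. \<eta> < \<bar>F t x - f x\<bar>}"
        using Fms[OF elim(2)] Dms[OF elim(2)] by (rule emeasure_subadditive)
      finally have Gle: "G \<le> emeasure lebesgue {x. l < \<bar>F t x\<bar>} + emeasure lebesgue {x. \<eta> < \<bar>F t x - f x\<bar>}" .
      show ?case
      proof (rule ccontr)
        assume "\<not> ?case"
        then have "emeasure lebesgue {x. l < \<bar>F t x\<bar>} \<le> a" by simp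
        then have "G \<le> a + emeasure lebesgue {x. \<eta> < \<bar>F t x - f x\<bar>}"
          using Gle by (meson add_right_mono order_trans)
        also have "\<dots> < a + (G - a)"
          using elim(1) aG Gf by (simp add: ennreal_add_left_cancel_less less_top[symmetric])
             (metis less_trans top.not_eq_extremum)
        also have "\<dots> = G" using aG by (intro add_diff_inverse_ennreal) simp
        finally show False by simp
      qed
    qed
  next
    fix a assume a: "emeasure lebesgue {x. l < \<bar>f x\<bar>} < a"
    define D where "D n = {x. l - l / real (n+2) < \<bar>f x\<bar>}" for n
    have dec: "decseq D"
      unfolding decseq_def D_def
    proof (intro allI impI subsetI)
      fix m n x assume mn: "m \<le> n" and x: "x \<in> {x. l - l / real (n+2) < \<bar>f x\<bar>}"
      have "l / real (n+2) \<le> l / real (m+2)"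
        using mn l by (intro divide_left_mono) auto
      then show "x \<in> {x. l - l / real (m+2) < \<bar>f x\<bar>}" using x by auto
    qed
    have lpos: "\<And>n. 0 < l - l / real (n+2)"
    proof -
      fix n
      have "l / real (n+2) < l / 1" using l by (intro divide_strict_left_mono) auto
      then show "0 < l - l / real (n+2)" by simp
    qed
    have Dfin: "\<And>n. emeasure lebesgue (D n) \<noteq> \<infinity>"
      unfolding D_def using gfin[OF lpos] by (simp add: less_top)
    have ID: "(\<Inter>n. D n) \<subseteq> {x. l < \<bar>f x\<bar>} \<union> {x. \<bar>f x\<bar> = l}"
    proof
      fix x assume x: "x \<in> (\<Inter>n. D n)"
      show "x \<in> {x. l < \<bar>f x\<bar>} \<union> {x. \<bar>f x\<bar> = l}"
      proof (rule ccontr)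
        assume "x \<notin> {x. l < \<bar>f x\<bar>} \<union> {x. \<bar>f x\<bar> = l}"
        then have lt: "\<bar>f x\<bar> < l" by auto
        then have "0 < (l - \<bar>f x\<bar>) / l" using l by simp
        then obtain n where n: "inverse (real (Suc n)) < (l - \<bar>f x\<bar>) / l"
          using reals_Archimedean by blast
        have "l / real (n+2) \<le> l / real (Suc n)"
          using l by (intro divide_left_mono) auto
        also have "l / real (Suc n) < l - \<bar>f x\<bar>" using n l
          by (simp add: field_simps)
        finally have "\<bar>f x\<bar> \<le> l - l / real (n+2)" by simp
        moreover have "x \<in> D n" using x by auto
        ultimately show False unfolding D_def by simp
      qed
    qed
    have lvs: "{x. \<bar>f x\<bar> = l} \<in> sets lebesgue"
    proof -
      have "{x\<in>space lebesgue. \<bar>f x\<bar> = l} \<in> sets lebesgue" using fm by measurable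
      then show ?thesis by simp
    qed
    have "emeasure lebesgue (\<Inter>n. D n) \<le> emeasure lebesgue ({x. l < \<bar>f x\<bar>} \<union> {x. \<bar>f x\<bar> = l})"
      using ID fms lvs by (intro emeasure_mono) auto
    also have "\<dots> \<le> emeasure lebesgue {x. l < \<bar>f x\<bar>} + emeasure lebesgue {x. \<bar>f x\<bar> = l}"
      using fms lvs by (rule emeasure_subadditive)
    also have "\<dots> = emeasure lebesgue {x. l < \<bar>f x\<bar>}" using lev[OF l] by simp
    finally have "emeasure lebesgue (\<Inter>n. D n) < a" using a by simp
    moreover have "(\<lambda>n. emeasure lebesgue (D n)) \<longlonglongrightarrow> emeasure lebesgue (\<Inter>n. D n)"
      using fms dec Dfin unfolding D_def by (intro Lim_emeasure_decseq) auto
    ultimately have "eventually (\<lambda>n. emeasure lebesgue (D n) < a) sequentially"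
      by (intro order_tendstoD(2)) auto
    then obtain n where n: "emeasure lebesgue (D n) < a"
      by (auto simp: eventually_sequentially)
    define \<eta> where "\<eta> = l / real (n+2)"
    have eta: "0 < \<eta>" using l unfolding \<eta>_def by simp
    define G where "G = emeasure lebesgue (D n)"
    have Gf: "G < \<infinity>" unfolding G_def using Dfin[of n] by (simp add: less_top)
    have aG: "G < a" using n G_def by simp
    have c: "0 < a - G" using aG by (rule diff_gr0_ennreal)
    have ev: "\<forall>\<^sub>F t in at_right 0. emeasure lebesgue {x. \<eta> < \<bar>F t x - f x\<bar>} < a - G"
      using order_tendstoD(2)[OF Cl[OF eta] c] .
    show "\<forall>\<^sub>F t in at_right 0. emeasure lebesgue {x. l < \<bar>F t x\<bar>} < a"
      using ev eventually_at_right_less[of "0::real"]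
    proof eventually_elim
      case (elim t)
      have sub: "{x. l < \<bar>F t x\<bar>} \<subseteq> D n \<union> {x. \<eta> < \<bar>F t x - f x\<bar>}"
        unfolding D_def \<eta>_def by auto
      have "emeasure lebesgue {x. l < \<bar>F t x\<bar>} \<le> emeasure lebesgue (D n \<union> {x. \<eta> < \<bar>F t x - f x\<bar>})"
        using sub fms Dms[OF elim(2)] unfolding D_def by (intro emeasure_mono) auto
      also have "\<dots> \<le> G + emeasure lebesgue {x. \<eta> < \<bar>F t x - f x\<bar>}"
        unfolding G_def using fms Dms[OF elim(2)] unfolding D_def by (rule emeasure_subadditive)
      also have "\<dots> < a"
        using elim(1) Gf by (subst add.commute) (simp add: less_diff_eq_ennreal)
      finally show ?case .
    qed
  qed
qed


lemma ex2: "\<exists>(p::real) (f::'a::euclidean_space \<Rightarrow> real) F. hyps p f F \<and> cond3 f F \<and> \<not> cond2 f F"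
proof -
  define f where "f = (\<lambda>x::'a. max 0 (1 - norm x))"
  define F where "F = (\<lambda>(t::real) x. - f x)"
  have fm: "f \<in> borel_measurable lebesgue"
  proof -
    have "continuous_on UNIV f" unfolding f_def by (intro continuous_intros)
    then have "f \<in> borel_measurable borel" by (rule borel_measurable_continuous_onI)
    then show ?thesis by (simp add: measurable_completion)
  qed
  have wn: "weak_Lp_norm 1 UNIV f \<le> emeasure lebesgue (ball (0::'a) 1)"
    unfolding weak_Lp_norm_def enn_powr_one'
  proof (rule SUP_least)
    fix l :: real assume "l \<in> {0<..}"
    then have l: "0 < l" by simp
    show "ennreal l * emeasure lebesgue {x \<in> UNIV. l < \<bar>f x\<bar>} \<le> emeasure lebesgue (ball (0::'a) 1)"
    proof (cases "l < 1")
      case True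
      have "{x \<in> UNIV. l < \<bar>f x\<bar>} \<subseteq> ball 0 1" using l unfolding f_def by auto
      then have "emeasure lebesgue {x \<in> UNIV. l < \<bar>f x\<bar>} \<le> emeasure lebesgue (ball (0::'a) 1)"
        by (intro emeasure_mono) auto
      moreover have "ennreal l \<le> 1" using True by simp
      ultimately show ?thesis
        by (metis mult_1 mult_mono zero_le)
    next
      case False
      have "\<bar>f x\<bar> \<le> 1" for x unfolding f_def by (smt (verit) norm_ge_zero)
      then have "{x \<in> UNIV. l < \<bar>f x\<bar>} = {}" using False by (auto simp: not_less) (meson le_less_trans not_less)
      then show ?thesis by simp
    qed
  qed
  then have W: "in_weak_Lp 1 f" unfolding in_weak_Lp_def using fm ball_fin[of 1]
    by (meson le_less_trans)
  have lev: "\<forall>l>0. emeasure lebesgue {x. \<bar>f x\<bar> = l} = 0"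
  proof (intro allI impI)
    fix l :: real assume l: "0 < l"
    have "{x. \<bar>f x\<bar> = l} \<subseteq> sphere 0 (1 - l)" using l unfolding f_def by auto
    then have "negligible {x. \<bar>f x\<bar> = l}" using negligible_sphere negligible_subset by blast
    then show "emeasure lebesgue {x. \<bar>f x\<bar> = l} = 0"
      by (simp add: negligible_iff_null_sets null_setsD1)
  qed
  have H: "hyps 1 f F" unfolding hyps_def using W lev fm unfolding F_def by auto
  have C3: "cond3 f F" unfolding cond3_def F_def by simp
  have nC2: "\<not> cond2 f F"
  proof
    assume "cond2 f F"
    then have T: "((\<lambda>t. emeasure lebesgue {x. 1 < \<bar>F t x - f x\<bar>}) \<longlongrightarrow> 0) (at_right 0)"
      unfolding cond2_def by simp
    have eq: "{x. 1 < \<bar>F t x - f x\<bar>} = ball (0::'a) (1/2)" for t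
      unfolding F_def f_def by (auto simp: dist_norm max_def split: if_splits)
    have "((\<lambda>t. emeasure lebesgue (ball (0::'a) (1/2))) \<longlongrightarrow> 0) (at_right (0::real))"
      using T by (simp only: eq)
    then have "emeasure lebesgue (ball (0::'a) (1/2)) = 0"
      by (simp add: tendsto_const_iff)
    moreover have "0 < emeasure lebesgue (ball (0::'a) (1/2))" by (rule ball_pos) simp
    ultimately show False by simp
  qed
  show ?thesis using H C3 nC2 by blast
qed

lemma ex3: "\<exists>(p::real) (f::'a::euclidean_space \<Rightarrow> real) F. hyps p f F \<and> cond2 f F \<and> \<not> cond1 p f F"
proof -
  define f where "f = (\<lambda>x::'a. 0::real)"
  define F where "F = (\<lambda>(t::real) (x::'a). t)"
  have wn: "weak_Lp_norm 1 UNIV f = 0"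
    unfolding weak_Lp_norm_def f_def by (simp add: enn_powr_one)
  have H: "hyps 1 f F" unfolding hyps_def in_weak_Lp_def using wn
    unfolding F_def f_def by auto
  have C2: "cond2 f F"
    unfolding cond2_def
  proof (intro allI impI)
    fix l :: real assume l: "0 < l"
    have "\<forall>\<^sub>F t in at_right 0. emeasure lebesgue {x. l < \<bar>F t x - f x\<bar>} = 0"
      using eventually_at_right_real[OF l]
    proof eventually_elim
      case (elim t)
      then have "{x. l < \<bar>F t x - f x\<bar>} = {}" unfolding F_def f_def by auto
      then show ?case by simp
    qed
    then show "((\<lambda>t. emeasure lebesgue {x. l < \<bar>F t x - f x\<bar>}) \<longlongrightarrow> 0) (at_right 0)"
      by (rule tendsto_eventually)
  qed
  have nC1: "\<not> cond1 1 f F"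
  proof
    assume "cond1 1 f F"
    then obtain A where A: "A \<in> sets lebesgue" "emeasure lebesgue A < ennreal 1"
      and T: "((\<lambda>t. weak_Lp_norm 1 (UNIV - A) (\<lambda>x. f x - F t x)) \<longlongrightarrow> 0) (at_right 0)"
      unfolding cond1_def by (meson zero_less_one)
    have "emeasure lebesgue (UNIV::'a set) \<le> emeasure lebesgue A + emeasure lebesgue (UNIV - A)"
    proof -
      have "emeasure lebesgue (UNIV::'a set) = emeasure lebesgue (A \<union> (UNIV - A))" by simp
      also have "\<dots> \<le> emeasure lebesgue A + emeasure lebesgue (UNIV - A)"
        using A(1) by (intro emeasure_subadditive) auto
      finally show ?thesis .
    qed
    then have inf: "emeasure lebesgue (UNIV - A) = \<infinity>"
      using A(2) by (auto simp: top_unique ennreal_add_eq_top)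
    have ev: "\<forall>\<^sub>F t in at_right 0. weak_Lp_norm 1 (UNIV - A) (\<lambda>x. f x - F t x) = \<infinity>"
      using eventually_at_right_less[of "0::real"]
    proof eventually_elim
      case (elim t)
      have "ennreal (t/2) * enn_powr (emeasure lebesgue {x\<in>UNIV - A. t/2 < \<bar>f x - F t x\<bar>}) (1/1)
          \<le> weak_Lp_norm 1 (UNIV - A) (\<lambda>x. f x - F t x)"
        unfolding weak_Lp_norm_def by (rule SUP_upper) (use elim in auto)
      moreover have "{x\<in>UNIV - A. t/2 < \<bar>f x - F t x\<bar>} = UNIV - A"
        using elim unfolding f_def F_def by auto
      ultimately show ?case using elim inf
        by (simp add: enn_powr_one ennreal_mult_top top_unique)
    qed
    then have "((\<lambda>t. \<infinity>::ennreal) \<longlongrightarrow> 0) (at_right (0::real))"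
      using tendsto_cong[OF ev] T by auto
    then show False by (simp add: tendsto_const_iff)
  qed
  show ?thesis using H C2 nC1 by blast
qed

theorem proposition2p1:
  shows "(\<forall>(p::real) (f::'a::euclidean_space \<Rightarrow> real) F. hyps p f F \<longrightarrow>
            (cond1 p f F \<longrightarrow> cond2 f F) \<and> (cond2 f F \<longrightarrow> cond3 f F))
       \<and> (\<exists>(p::real) (f::'a \<Rightarrow> real) F. hyps p f F \<and> cond3 f F \<and> \<not> cond2 f F)
       \<and> (\<exists>(p::real) (f::'a \<Rightarrow> real) F. hyps p f F \<and> cond2 f F \<and> \<not> cond1 p f F)"
  using imp12 imp23 ex2 ex3 by blast

end
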